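(* Fix a constant $r<\frac{1}{93}$ and let $n,k$ be positive integers with $k=rn$ and $k\ge 2$. Then $$\overline{\mathrm{dist}}_F(\mathcal{S}^{n,k},\mathcal{S}^n_+)>\frac{\sqrt{r-93r^2}}{\sqrt{162r+3}}.$$
   Context: $\mathcal{S}^n_+$ denotes the cone of $n\times n$ real symmetric positive semidefinite (PSD) matrices. For integers $2\le k\le n$, the $k$-PSD closure $\mathcal{S}^{n,k}$ is the set of all $n\times n$ real symmetric matrices all of whose $k\times k$ principal submatrices are PSD. For a matrix $M$, $\mathrm{dist}_F(M,\mathcal{S}^n_+)=\inf_{N\in\mathcal{S}^n_+}\|M-N\|_F$, where $\|\cdot\|_F$ is the Frobenius norm. For a set $\mathcal{K}$ of $n\times n$ matrices, $\overline{\mathrm{dist}}_F(\mathcal{K},\mathcal{S}^n_+)=\sup_{M\in\mathcal{K},\ \|M\|_F=1}\mathrm{dist}_F(M,\mathcal{S}^n_+)$. *)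

theory Defs
  imports "HOL-Analysis.Analysis"
begin

text \<open>Real symmetric n x n matrices are modelled as real^'n^'n with the finite index type 'n, n = CARD('n).\<close>

definition sym_mat :: "real^'n^'n \<Rightarrow> bool" where
  "sym_mat A \<longleftrightarrow> transpose A = A"

definition psd :: "real^'n^'n \<Rightarrow> bool" where
  "psd A \<longleftrightarrow> sym_mat A \<and> (\<forall>x::real^'n. 0 \<le> x \<bullet> (A *v x))"

definition principal_psd :: "real^'n^'n \<Rightarrow> 'n set \<Rightarrow> bool" where
  "principal_psd A S \<longleftrightarrow>
     (\<forall>x::'n \<Rightarrow> real. 0 \<le> (\<Sum>i\<in>S. \<Sum>j\<in>S. x i * A$i$j * x j))"

definition kpsd_closure :: "nat \<Rightarrow> (real^'n^'n) set" where
  "kpsd_closure k = {A. sym_mat A \<and> (\<forall>S. card S = k \<longrightarrow> principal_psd A S)}"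

definition frob :: "real^'n^'n \<Rightarrow> real" where
  "frob A = sqrt (\<Sum>i\<in>UNIV. \<Sum>j\<in>UNIV. (A$i$j)^2)"

definition distF_psd :: "real^'n^'n \<Rightarrow> real" where
  "distF_psd M = Inf {frob (M - N) | N. psd N}"

definition distF_bar :: "(real^'n^'n) set \<Rightarrow> real" where
  "distF_bar K = Sup {distF_psd M | M. M \<in> K \<and> frob M = 1}"

end

theory Submission
  imports Defs "HOL-Probability.Hoeffding"
begin

lemma cosh_le:
  fixes t :: real
  shows "exp t + exp (-t) \<le> 2 * exp (t^2/2)"
proof -
  define u where "u = \<bar>t\<bar>"
  define h where "h = 2 * u"
  have h0: "h \<ge> 0" by (simp add: h_def u_def)
  have "-h * (1/2) + ln (1 + (1/2) * (exp h - 1)) \<le> h^2/8"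
    using Hoeffdings_lemma_aux[of h "1/2"] h0 by fastforce
  moreover have "1 + (1/2) * (exp h - 1) = (1 + exp h)/2" by (simp add: field_simps)
  ultimately have "ln ((1 + exp h)/2) \<le> h/2 + h^2/8" by (simp only:)
  moreover have pos: "0 < (1 + exp h)/2" by (simp add: add_pos_pos)
  ultimately have "(1 + exp h)/2 \<le> exp (h/2 + h^2/8)"
    by (metis exp_le_cancel_iff exp_ln)
  moreover have "h/2 + h^2/8 = u + t^2/2" by (simp add: h_def u_def power2_eq_square)
  moreover have "exp h = exp u * exp u" by (simp add: h_def flip: exp_add)
  ultimately have "(1 + exp u * exp u)/2 \<le> exp u * exp (t^2/2)" by (simp add: exp_add)
  hence "(1 + exp u * exp u) * exp (-u) \<le> 2 * exp (t^2/2)"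
    by (simp add: field_simps exp_minus)
  moreover have "(1 + exp u * exp u) * exp (-u) = exp u + exp (-u)"
    by (simp add: field_simps exp_minus)
  ultimately have "exp u + exp (-u) \<le> 2 * exp (t^2/2)" by simp
  thus ?thesis by (cases "t \<ge> 0") (auto simp: u_def)
qed

lemma hoeff_count:
  fixes A :: "'p set" and w :: "'p \<Rightarrow> real" and s :: real
  assumes fin: "finite A" and w2: "(\<Sum>p\<in>A. (w p)^2) \<le> 1" and s0: "s \<ge> 0"
  shows "real (card {Q \<in> PiE A (\<lambda>_. {-1,1::real}). s \<le> (\<Sum>p\<in>A. w p * Q p)})
           \<le> 2^card A * exp (-(s^2)/2)"
proof -
  define \<Omega> where "\<Omega> = PiE A (\<lambda>_. {-1,1::real})"
  have finO: "finite \<Omega>" unfolding \<Omega>_def using fin by (simp add: finite_PiE)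
  have "real (card {Q \<in> \<Omega>. s \<le> (\<Sum>p\<in>A. w p * Q p)})
        = (\<Sum>Q\<in>\<Omega>. if s \<le> (\<Sum>p\<in>A. w p * Q p) then 1 else 0)"
    using finO by (simp add: sum.If_cases Int_def)
  also have "\<dots> \<le> (\<Sum>Q\<in>\<Omega>. exp (s * (\<Sum>p\<in>A. w p * Q p) - s^2))"
  proof (rule sum_mono)
    fix Q assume "Q \<in> \<Omega>"
    show "(if s \<le> (\<Sum>p\<in>A. w p * Q p) then 1 else 0) \<le> exp (s * (\<Sum>p\<in>A. w p * Q p) - s^2)"
    proof (cases "s \<le> (\<Sum>p\<in>A. w p * Q p)")
      case True
      hence "0 \<le> s * ((\<Sum>p\<in>A. w p * Q p) - s)" using s0 by simp
      hence "0 \<le> s * (\<Sum>p\<in>A. w p * Q p) - s^2" by (simp add: algebra_simps power2_eq_square)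
      thus ?thesis using True by simp
    qed simp
  qed
  also have "\<dots> = (\<Sum>Q\<in>\<Omega>. exp (-(s^2)) * (\<Prod>p\<in>A. exp (s * w p * Q p)))"
    proof (rule sum.cong)
    fix Q assume "Q \<in> \<Omega>"
    have "exp (s * (\<Sum>p\<in>A. w p * Q p)) = (\<Prod>p\<in>A. exp (s * w p * Q p))"
      using fin by (simp add: exp_sum[symmetric] sum_distrib_left mult.assoc)
    thus "exp (s * (\<Sum>p\<in>A. w p * Q p) - s^2) = exp (-(s^2)) * (\<Prod>p\<in>A. exp (s * w p * Q p))"
      by (simp add: exp_diff exp_minus field_simps)
  qed simp
  also have "\<dots> = exp (-(s^2)) * (\<Sum>Q\<in>\<Omega>. (\<Prod>p\<in>A. exp (s * w p * Q p)))"
    by (simp add: sum_distrib_left)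
  also have "(\<Sum>Q\<in>\<Omega>. (\<Prod>p\<in>A. exp (s * w p * Q p))) = (\<Prod>p\<in>A. \<Sum>b\<in>{-1,1::real}. exp (s * w p * b))"
    unfolding \<Omega>_def using prod_sum_PiE[OF fin, of "\<lambda>_. {-1,1::real}" "\<lambda>p b. exp (s * w p * b)"] by simp
  also have "\<dots> = (\<Prod>p\<in>A. exp (s * w p) + exp (-(s * w p)))"
    by (simp add: add.commute)
  also have "\<dots> \<le> (\<Prod>p\<in>A. 2 * exp ((s * w p)^2/2))"
    by (rule prod_mono) (simp add: cosh_le add_nonneg_nonneg)
  also have "\<dots> = 2^card A * exp (s^2/2 * (\<Sum>p\<in>A. (w p)^2))"
    using fin by (simp add: prod.distrib exp_sum[symmetric] sum_distrib_left power_mult_distrib)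
  finally have "real (card {Q \<in> \<Omega>. s \<le> (\<Sum>p\<in>A. w p * Q p)})
        \<le> exp (-(s^2)) * (2^card A * exp (s^2/2 * (\<Sum>p\<in>A. (w p)^2)))"
    by simp
  also have "\<dots> \<le> exp (-(s^2)) * (2^card A * exp (s^2/2))"
    using w2 by (intro mult_left_mono) (auto intro!: mult_right_le_one_le simp: mult_left_le)
  also have "\<dots> = 2^card A * exp (-(s^2)/2)"
    by (simp add: exp_add[symmetric] field_simps)
  finally show ?thesis unfolding \<Omega>_def .
qed

definition trz :: "real \<Rightarrow> int" where
  "trz v = (if v \<ge> 0 then \<lfloor>v\<rfloor> else - \<lfloor>-v\<rfloor>)"

lemma trz_le: "\<bar>real_of_int (trz v)\<bar> \<le> \<bar>v\<bar>"
proof (cases "v \<ge> 0")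
  case False
  hence "0 \<le> \<lfloor>-v\<rfloor>" by simp
  moreover have "real_of_int \<lfloor>-v\<rfloor> \<le> -v" by simp
  ultimately show ?thesis using False unfolding trz_def by simp
qed (simp add: trz_def)

lemma trz_close: "\<bar>v - real_of_int (trz v)\<bar> < 1"
  unfolding trz_def
  by (cases "v \<ge> 0") (auto simp: abs_if, linarith+)

definition netpts :: "'a set \<Rightarrow> ('a \<Rightarrow> real) set" where
  "netpts I = {y. (\<exists>m \<in> PiE I (\<lambda>_. {-int(10*card I)..int(10*card I)}).
       (\<Sum>i\<in>I. \<bar>m i\<bar>) \<le> int(10*card I) \<and> y = (\<lambda>i. real_of_int (m i) / (10 * sqrt(card I))))
       \<and> (\<Sum>i\<in>I. (y i)^2) \<le> 1}"

lemma netpts_norm: "y \<in> netpts I \<Longrightarrow> (\<Sum>i\<in>I. (y i)^2) \<le> 1"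
  unfolding netpts_def by auto

lemma oneD_sum:
  fixes R :: nat
  shows "(\<Sum>j\<in>{-int R..int R}. exp (-\<bar>real_of_int j\<bar>/10)) \<le> 21 - 20 * exp (- real R/10)"
proof (induction R)
  case 0
  then show ?case by simp
next
  case (Suc R)
  have set: "{-int (Suc R)..int (Suc R)} = insert (int (Suc R)) (insert (-int (Suc R)) {-int R..int R})"
    by auto
  have "(\<Sum>j\<in>{-int (Suc R)..int (Suc R)}. exp (-\<bar>real_of_int j\<bar>/10))
      = 2 * exp (- real (Suc R)/10) + (\<Sum>j\<in>{-int R..int R}. exp (-\<bar>real_of_int j\<bar>/10))"
    unfolding set by (simp add: field_simps)
  also have "\<dots> \<le> 2 * exp (- real (Suc R)/10) + 21 - 20 * exp (- real R/10)"
    using Suc.IH by simp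
  also have "\<dots> \<le> 21 - 20 * exp (- real (Suc R)/10)"
  proof -
    have e: "exp (- real R/10) = exp (1/10) * exp (- real (Suc R)/10)"
      by (simp add: exp_add[symmetric] field_simps)
    have "1 + 1/10 \<le> exp (1/10::real)" by (rule exp_ge_add_one_self)
    hence "22 * exp (- real (Suc R)/10) \<le> 20 * (exp (1/10) * exp (- real (Suc R)/10))"
    proof -
      have "22 * exp (- real (Suc R) / 10) = (20 * (1 + 1/10)) * exp (- real (Suc R) / 10)" by simp
      also have "\<dots> \<le> (20 * exp (1/10)) * exp (- real (Suc R) / 10)"
        using \<open>1 + 1 / 10 \<le> exp (1 / 10)\<close> by (intro mult_right_mono) auto
      finally show ?thesis by simp
    qed
    thus ?thesis unfolding e by simp
  qed
  finally show ?case .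
qed

lemma oneD_sum21:
  fixes R :: nat
  shows "(\<Sum>j\<in>{-int R..int R}. exp (-\<bar>real_of_int j\<bar>/10)) \<le> 21"
  using oneD_sum[of R] by (smt (verit) exp_gt_zero)

lemma netpts_card:
  assumes fin: "finite I" and ck: "card I = k"
  shows "finite (netpts I) \<and> real (card (netpts I)) \<le> (21 * exp 1)^k"
proof -
  define R where "R = int (10*k)"
  define P where "P = PiE I (\<lambda>_. {-R..R})"
  define S where "S = {m\<in>P. (\<Sum>i\<in>I. \<bar>m i\<bar>) \<le> R}"
  define \<phi> where "\<phi> = (\<lambda>m::'a\<Rightarrow>int. (\<lambda>i. real_of_int (m i) / (10 * sqrt(card I))))"
  have finP: "finite P" unfolding P_def using fin by (simp add: finite_PiE)
  have finS: "finite S" unfolding S_def using finP by simp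
  have sub: "netpts I \<subseteq> \<phi> ` S"
    unfolding netpts_def S_def P_def \<phi>_def R_def ck by auto
  have finN: "finite (netpts I)" using sub finS finite_subset by blast
  have "card (netpts I) \<le> card (\<phi> ` S)" using sub finS by (intro card_mono) auto
  also have "\<dots> \<le> card S" using finS by (rule card_image_le)
  finally have c1: "real (card (netpts I)) \<le> real (card S)" by simp
  have "real (card S) = (\<Sum>m\<in>P. if (\<Sum>i\<in>I. \<bar>m i\<bar>) \<le> R then 1 else 0)"
    unfolding S_def using finP by (simp add: sum.If_cases Int_def)
  also have "\<dots> \<le> (\<Sum>m\<in>P. exp ((real_of_int R - (\<Sum>i\<in>I. \<bar>real_of_int (m i)\<bar>))/10))"
  proof (rule sum_mono)
    fix m assume "m \<in> P"
    show "(if (\<Sum>i\<in>I. \<bar>m i\<bar>) \<le> R then 1 else 0) \<le> exp ((real_of_int R - (\<Sum>i\<in>I. \<bar>real_of_int (m i)\<bar>))/10)"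
    proof (cases "(\<Sum>i\<in>I. \<bar>m i\<bar>) \<le> R")
      case True
      hence "real_of_int (\<Sum>i\<in>I. \<bar>m i\<bar>) \<le> real_of_int R" by linarith
      hence "(\<Sum>i\<in>I. \<bar>real_of_int (m i)\<bar>) \<le> real_of_int R" by simp
      thus ?thesis using True by simp
    qed simp
  qed
  also have "\<dots> = (\<Sum>m\<in>P. exp (real k) * (\<Prod>i\<in>I. exp (-\<bar>real_of_int (m i)\<bar>/10)))"
  proof (rule sum.cong)
    fix m assume "m \<in> P"
    have "exp ((real_of_int R - (\<Sum>i\<in>I. \<bar>real_of_int (m i)\<bar>))/10)
          = exp (real k + (\<Sum>i\<in>I. -\<bar>real_of_int (m i)\<bar>/10))"
      by (simp add: R_def diff_divide_distrib sum_divide_distrib sum_negf)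
    also have "\<dots> = exp (real k) * (\<Prod>i\<in>I. exp (-\<bar>real_of_int (m i)\<bar>/10))"
      using fin by (simp add: exp_add exp_sum)
    finally show "exp ((real_of_int R - (\<Sum>i\<in>I. \<bar>real_of_int (m i)\<bar>))/10) = exp (real k) * (\<Prod>i\<in>I. exp (-\<bar>real_of_int (m i)\<bar>/10))" .
  qed simp
  also have "\<dots> = exp (real k) * (\<Sum>m\<in>P. (\<Prod>i\<in>I. exp (-\<bar>real_of_int (m i)\<bar>/10)))"
    by (simp add: sum_distrib_left)
  also have "(\<Sum>m\<in>P. (\<Prod>i\<in>I. exp (-\<bar>real_of_int (m i)\<bar>/10)))
       = (\<Prod>i\<in>I. \<Sum>j\<in>{-R..R}. exp (-\<bar>real_of_int j\<bar>/10))"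
    unfolding P_def using prod_sum_PiE[OF fin, of "\<lambda>_. {-R..R}" "\<lambda>i j. exp (-\<bar>real_of_int j\<bar>/10)"] by simp
  also have "\<dots> \<le> (\<Prod>i\<in>I. 21)"
    by (rule prod_mono) (auto simp: R_def intro: sum_nonneg oneD_sum21[of "10*k", simplified])
  also have "\<dots> = 21^k" using ck by simp
  finally have "real (card S) \<le> exp (real k) * 21^k"
    by (simp add: mult_left_mono)
  also have "\<dots> = (21 * exp 1)^k"
    by (simp add: power_mult_distrib exp_of_nat_mult[symmetric] mult.commute)
  finally show ?thesis using c1 finN by simp
qed

lemma netpts_approx:
  assumes fin: "finite I" and ck: "card I = k" and k1: "k \<ge> 1"
    and x1: "(\<Sum>i\<in>I. (x i)^2) \<le> 1"
  shows "\<exists>y\<in>netpts I. (\<Sum>i\<in>I. (x i - y i)^2) \<le> 1/100"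
proof -
  define c where "c = 10 * sqrt (real k)"
  have c0: "c > 0" using k1 by (simp add: c_def)
  define m where "m = restrict (\<lambda>i. trz (c * x i)) I"
  define y where "y = (\<lambda>i. real_of_int (m i) / (10 * sqrt (card I)))"
  have mi: "m i = trz (c * x i)" if "i \<in> I" for i using that by (simp add: m_def)
  have yi: "y i = real_of_int (trz (c * x i)) / c" if "i \<in> I" for i
    using that by (simp add: y_def mi c_def ck)
  have absx: "(\<Sum>i\<in>I. \<bar>x i\<bar>) \<le> sqrt (real k)"
  proof (rule real_le_rsqrt)
    have "(\<Sum>i\<in>I. \<bar>x i\<bar>)^2 \<le> (\<Sum>i\<in>I. \<bar>x i\<bar>^2) * card I"
      by (rule sum_squared_le_sum_of_squares)
    also have "\<dots> = (\<Sum>i\<in>I. (x i)^2) * real k" using ck by simp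
    also have "\<dots> \<le> 1 * real k" using x1 by (intro mult_right_mono) auto
    finally show "(\<Sum>i\<in>I. \<bar>x i\<bar>)^2 \<le> real k" by simp
  qed
  have "(\<Sum>i\<in>I. \<bar>real_of_int (m i)\<bar>) \<le> (\<Sum>i\<in>I. c * \<bar>x i\<bar>)"
  proof (rule sum_mono)
    fix i assume "i \<in> I"
    have "\<bar>real_of_int (trz (c * x i))\<bar> \<le> \<bar>c * x i\<bar>" by (rule trz_le)
    thus "\<bar>real_of_int (m i)\<bar> \<le> c * \<bar>x i\<bar>" using c0 \<open>i \<in> I\<close> by (simp add: mi abs_mult)
  qed
  also have "\<dots> = c * (\<Sum>i\<in>I. \<bar>x i\<bar>)" by (simp add: sum_distrib_left)
  also have "\<dots> \<le> c * sqrt (real k)" using absx c0 by (intro mult_left_mono) auto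
  also have "\<dots> = 10 * real k" using k1 by (simp add: c_def)
  finally have sm: "real_of_int (\<Sum>i\<in>I. \<bar>m i\<bar>) \<le> real_of_int (int (10 * k))" by simp
  hence sm': "(\<Sum>i\<in>I. \<bar>m i\<bar>) \<le> int (10 * card I)" using ck by linarith
  have mP: "m \<in> PiE I (\<lambda>_. {-int(10*card I)..int(10*card I)})"
  proof -
    have "\<bar>m i\<bar> \<le> int (10 * card I)" if "i \<in> I" for i
    proof -
      have "\<bar>m i\<bar> \<le> (\<Sum>i\<in>I. \<bar>m i\<bar>)"
        using fin that by (intro member_le_sum) auto
      thus ?thesis using sm' by linarith
    qed
    thus ?thesis unfolding m_def by (force simp: PiE_iff abs_le_iff)
  qed
  have ynorm: "(\<Sum>i\<in>I. (y i)^2) \<le> 1"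
  proof -
    have "(\<Sum>i\<in>I. (y i)^2) \<le> (\<Sum>i\<in>I. (x i)^2)"
    proof (rule sum_mono)
      fix i assume i: "i \<in> I"
      have "\<bar>real_of_int (trz (c * x i))\<bar> \<le> c * \<bar>x i\<bar>"
        using trz_le[of "c * x i"] c0 by (simp add: abs_mult)
      hence "\<bar>y i\<bar> \<le> \<bar>x i\<bar>" using c0 i by (simp add: yi divide_le_eq mult.commute)
      thus "(y i)^2 \<le> (x i)^2" by (simp add: abs_le_square_iff)
    qed
    thus ?thesis using x1 by simp
  qed
  have yN: "y \<in> netpts I"
    unfolding netpts_def using mP sm' ynorm by (auto simp: y_def)
  have "(\<Sum>i\<in>I. (x i - y i)^2) \<le> (\<Sum>i\<in>I. 1 / c^2)"
  proof (rule sum_mono)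
    fix i assume i: "i \<in> I"
    have "\<bar>c * x i - real_of_int (trz (c * x i))\<bar> < 1" by (rule trz_close)
    moreover have "c * x i - real_of_int (trz (c * x i)) = c * (x i - y i)"
      using c0 i by (simp add: yi field_simps)
    ultimately have "\<bar>x i - y i\<bar> * c < 1" using c0
      by (simp add: abs_mult mult.commute)
    hence "\<bar>x i - y i\<bar> \<le> 1 / c" using c0 by (simp add: field_simps)
    hence "\<bar>x i - y i\<bar>^2 \<le> (1/c)^2" by (intro power_mono) auto
    thus "(x i - y i)^2 \<le> 1 / c^2" by (simp add: power_divide)
  qed
  also have "\<dots> = real k / c^2" using ck by simp
  also have "\<dots> = 1/100" using k1 by (simp add: c_def power_mult_distrib)
  finally show ?thesis using yN by blast
qed

definition bil :: "'a set \<Rightarrow> 'b set \<Rightarrow> ('a \<Rightarrow> 'b \<Rightarrow> real) \<Rightarrow> ('a \<Rightarrow> real) \<Rightarrow> ('b \<Rightarrow> real) \<Rightarrow> real" where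
  "bil I J q x y = (\<Sum>i\<in>I. \<Sum>j\<in>J. x i * y j * q i j)"

lemma bil_scale_x: "bil I J q (\<lambda>i. c * x i) y = c * bil I J q x y"
  by (simp add: bil_def sum_distrib_left mult.assoc)

lemma bil_scale_y: "bil I J q x (\<lambda>j. c * y j) = c * bil I J q x y"
  by (simp add: bil_def sum_distrib_left algebra_simps)

lemma bil_diff_x: "bil I J q (\<lambda>i. x i - x' i) y = bil I J q x y - bil I J q x' y"
  by (simp add: bil_def algebra_simps sum_subtractf)

lemma bil_diff_y: "bil I J q x (\<lambda>j. y j - y' j) = bil I J q x y - bil I J q x y'"
  by (simp add: bil_def algebra_simps sum_subtractf)

lemma bil_bound:
  assumes "(\<Sum>i\<in>I. (x i)^2) \<le> 1" "(\<Sum>j\<in>J. (y j)^2) \<le> 1" "finite I" "finite J"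
  shows "bil I J q x y \<le> (\<Sum>i\<in>I. \<Sum>j\<in>J. \<bar>q i j\<bar>)"
proof -
  have xi: "\<bar>x i\<bar> \<le> 1" if "i \<in> I" for i
  proof -
    have "(x i)^2 \<le> (\<Sum>i\<in>I. (x i)^2)" using assms(3) that by (intro member_le_sum) auto
    hence "(x i)^2 \<le> 1" using assms(1) by simp
    thus ?thesis by (simp add: abs_square_le_1)
  qed
  have yj: "\<bar>y j\<bar> \<le> 1" if "j \<in> J" for j
  proof -
    have "(y j)^2 \<le> (\<Sum>j\<in>J. (y j)^2)" using assms(4) that by (intro member_le_sum) auto
    hence "(y j)^2 \<le> 1" using assms(2) by simp
    thus ?thesis by (simp add: abs_square_le_1)
  qed
  have "bil I J q x y \<le> (\<Sum>i\<in>I. \<Sum>j\<in>J. \<bar>x i * y j * q i j\<bar>)"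
    unfolding bil_def by (intro sum_mono) auto
  also have "\<dots> \<le> (\<Sum>i\<in>I. \<Sum>j\<in>J. \<bar>q i j\<bar>)"
  proof (intro sum_mono)
    fix i j assume "i \<in> I" "j \<in> J"
    have "\<bar>x i * y j\<bar> \<le> 1" using xi[OF \<open>i\<in>I\<close>] yj[OF \<open>j\<in>J\<close>]
      by (simp add: abs_mult mult_le_one)
    thus "\<bar>x i * y j * q i j\<bar> \<le> \<bar>q i j\<bar>"
      by (simp add: abs_mult mult_left_le_one_le)
  qed
  finally show ?thesis .
qed

lemma net_bound:
  assumes finI: "finite I" and finJ: "finite J" and cI: "card I \<ge> 1" and cJ: "card J \<ge> 1"
    and s0: "s \<ge> 0"
    and H: "\<And>x y. x \<in> netpts I \<Longrightarrow> y \<in> netpts J \<Longrightarrow> bil I J q x y \<le> s"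
  shows "(\<Sum>j\<in>J. (\<Sum>i\<in>I. x i * q i j)^2) \<le> (5/4 * s)^2 * (\<Sum>i\<in>I. (x i)^2)"
proof -
  define D where "D = {bil I J q x y | x y. (\<Sum>i\<in>I. (x i)^2) \<le> 1 \<and> (\<Sum>j\<in>J. (y j)^2) \<le> 1}"
  define K where "K = Sup D"
  have bdd: "bdd_above D"
    unfolding D_def using bil_bound finI finJ by (intro bdd_aboveI[where M="\<Sum>i\<in>I. \<Sum>j\<in>J. \<bar>q i j\<bar>"]) blast
  have inD: "bil I J q x y \<in> D" if "(\<Sum>i\<in>I. (x i)^2) \<le> 1" "(\<Sum>j\<in>J. (y j)^2) \<le> 1" for x y
    unfolding D_def using that by blast
  have leK: "bil I J q x y \<le> K" if "(\<Sum>i\<in>I. (x i)^2) \<le> 1" "(\<Sum>j\<in>J. (y j)^2) \<le> 1" for x y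
    unfolding K_def using inD[OF that] bdd by (rule cSup_upper)
  have K0: "0 \<le> K"
    using leK[of "\<lambda>_. 0" "\<lambda>_. 0"] by (simp add: bil_def)
  have hx: "bil I J q x y \<le> \<rho> * K"
    if "(\<Sum>i\<in>I. (x i)^2) \<le> \<rho>^2" "(\<Sum>j\<in>J. (y j)^2) \<le> 1" "\<rho> > 0" for x y \<rho>
  proof -
    have "(\<Sum>i\<in>I. ((1/\<rho>) * x i)^2) = (1/\<rho>)^2 * (\<Sum>i\<in>I. (x i)^2)"
      by (simp add: power_mult_distrib sum_distrib_left power_divide)
    also have "\<dots> \<le> (1/\<rho>)^2 * \<rho>^2" using that by (intro mult_left_mono) auto
    also have "\<dots> = 1" using that by (simp add: power_divide)
    finally have "bil I J q (\<lambda>i. (1/\<rho>) * x i) y \<le> K" using that by (intro leK) auto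
    hence "(1/\<rho>) * bil I J q x y \<le> K" by (simp only: bil_scale_x)
    thus ?thesis using that by (simp add: field_simps)
  qed
  have hy: "bil I J q x y \<le> \<rho> * K"
    if "(\<Sum>i\<in>I. (x i)^2) \<le> 1" "(\<Sum>j\<in>J. (y j)^2) \<le> \<rho>^2" "\<rho> > 0" for x y \<rho>
  proof -
    have "(\<Sum>j\<in>J. ((1/\<rho>) * y j)^2) = (1/\<rho>)^2 * (\<Sum>j\<in>J. (y j)^2)"
      by (simp add: power_mult_distrib sum_distrib_left power_divide)
    also have "\<dots> \<le> (1/\<rho>)^2 * \<rho>^2" using that by (intro mult_left_mono) auto
    also have "\<dots> = 1" using that by (simp add: power_divide)
    finally have "bil I J q x (\<lambda>j. (1/\<rho>) * y j) \<le> K" using that by (intro leK) auto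
    hence "(1/\<rho>) * bil I J q x y \<le> K" by (simp only: bil_scale_y)
    thus ?thesis using that by (simp add: field_simps)
  qed
  have main: "bil I J q x y \<le> s + K/5"
    if x1: "(\<Sum>i\<in>I. (x i)^2) \<le> 1" and y1: "(\<Sum>j\<in>J. (y j)^2) \<le> 1" for x y
  proof -
    obtain x0 where x0: "x0 \<in> netpts I" "(\<Sum>i\<in>I. (x i - x0 i)^2) \<le> 1/100"
      using netpts_approx[OF finI refl cI x1] by blast
    obtain y0 where y0: "y0 \<in> netpts J" "(\<Sum>j\<in>J. (y j - y0 j)^2) \<le> 1/100"
      using netpts_approx[OF finJ refl cJ y1] by blast
    have "bil I J q x y = bil I J q x0 y0 + bil I J q (\<lambda>i. x i - x0 i) y + bil I J q x0 (\<lambda>j. y j - y0 j)"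
      by (simp add: bil_diff_x bil_diff_y)
    also have "\<dots> \<le> s + (1/10) * K + (1/10) * K"
    proof (intro add_mono)
      show "bil I J q x0 y0 \<le> s" using H x0(1) y0(1) .
      show "bil I J q (\<lambda>i. x i - x0 i) y \<le> (1/10) * K"
        using hx[of "\<lambda>i. x i - x0 i" "1/10" y] x0(2) y1 by (simp add: power_divide)
      show "bil I J q x0 (\<lambda>j. y j - y0 j) \<le> (1/10) * K"
        using hy[of x0 "\<lambda>j. y j - y0 j" "1/10"] y0(2) netpts_norm[OF x0(1)] by (simp add: power_divide)
    qed
    finally show ?thesis by simp
  qed
  have "K \<le> s + K/5"
    unfolding K_def
  proof (rule cSup_least)
    show "D \<noteq> {}" using inD[of "\<lambda>_. 0" "\<lambda>_. 0"] by auto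
    show "\<And>v. v \<in> D \<Longrightarrow> v \<le> s + Sup D / 5"
      using main unfolding D_def K_def by blast
  qed
  hence Ks: "K \<le> 5/4 * s" by simp
  define z where "z = (\<lambda>j. \<Sum>i\<in>I. x i * q i j)"
  define \<zeta> where "\<zeta> = sqrt (\<Sum>j\<in>J. (z j)^2)"
  define \<rho> where "\<rho> = sqrt (\<Sum>i\<in>I. (x i)^2)"
  have zz: "(\<Sum>j\<in>J. (z j)^2) = \<zeta>^2" unfolding \<zeta>_def by (simp add: sum_nonneg)
  have xx: "(\<Sum>i\<in>I. (x i)^2) = \<rho>^2" unfolding \<rho>_def by (simp add: sum_nonneg)
  show ?thesis
  proof (cases "\<zeta> = 0")
    case True
    thus ?thesis using zz xx unfolding z_def by simp
  next
    case False
    have "\<zeta> \<ge> 0" unfolding \<zeta>_def by (simp add: sum_nonneg)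
    hence \<zeta>0: "\<zeta> > 0" using False by simp
    define y where "y = (\<lambda>j. z j / \<zeta>)"
    have y1: "(\<Sum>j\<in>J. (y j)^2) \<le> 1"
      using \<zeta>0 zz by (simp add: y_def power_divide sum_divide_distrib[symmetric])
    have "bil I J q x y = (\<Sum>j\<in>J. y j * z j)"
      unfolding bil_def z_def by (subst sum.swap) (simp add: sum_distrib_left algebra_simps)
    also have "\<dots> = (\<Sum>j\<in>J. (z j)^2) / \<zeta>"
      by (simp add: y_def power2_eq_square sum_divide_distrib)
    also have "\<dots> = \<zeta>" using zz \<zeta>0 by (simp add: power2_eq_square)
    finally have bz: "bil I J q x y = \<zeta>" .
    have \<rho>0: "\<rho> > 0"
    proof (rule ccontr)
      assume "\<not> \<rho> > 0"
      moreover have "\<rho> \<ge> 0" unfolding \<rho>_def by (simp add: sum_nonneg)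
      ultimately have "\<rho> = 0" by simp
      hence "\<forall>i\<in>I. x i = 0" using xx finI by (simp add: sum_nonneg_eq_0_iff)
      hence "\<zeta> = 0" unfolding \<zeta>_def z_def by simp
      thus False using False by simp
    qed
    have "\<zeta> \<le> \<rho> * K" using hx[of x \<rho> y] xx y1 \<rho>0 bz by simp
    also have "\<dots> \<le> \<rho> * (5/4 * s)" using Ks \<rho>0 by (intro mult_left_mono) auto
    finally have "\<zeta> \<le> \<rho> * (5/4 * s)" .
    hence "\<zeta>^2 \<le> (\<rho> * (5/4 * s))^2" using \<zeta>0 by (intro power_mono) auto
    moreover have "(\<rho> * (5/4 * s))^2 = (5/4 * s)^2 * \<rho>^2" by (simp add: power2_eq_square)
    ultimately show ?thesis using zz xx unfolding z_def by simp
  qed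
qed

lemma pow_le_exp_fact: "real k ^ k \<le> exp (real k) * fact k"
proof (induction k)
  case 0 then show ?case by simp
next
  case (Suc k)
  have step: "real (Suc k) ^ k \<le> exp 1 * real k ^ k"
  proof (cases "k = 0")
    case True then show ?thesis by simp
  next
    case False
    have "(1 + 1 / real k) ^ k \<le> exp 1"
      using exp_ge_one_plus_x_over_n_power_n[of k 1] False by simp
    moreover have "real (Suc k) ^ k = real k ^ k * (1 + 1 / real k) ^ k"
      using False by (simp add: power_mult_distrib[symmetric] field_simps)
    moreover have "real k ^ k * (1 + 1 / real k) ^ k \<le> real k ^ k * exp 1"
      using calculation(1) by (intro mult_left_mono) auto
    ultimately show ?thesis by (simp add: mult.commute)
  qed
  have "real (Suc k) ^ Suc k = real (Suc k) * real (Suc k) ^ k" by simp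
  also have "\<dots> \<le> real (Suc k) * (exp 1 * real k ^ k)"
    using step by (intro mult_left_mono) auto
  also have "\<dots> \<le> real (Suc k) * (exp 1 * (exp (real k) * fact k))"
    using Suc.IH by (intro mult_left_mono) auto
  also have "\<dots> = exp (real (Suc k)) * fact (Suc k)"
    by (simp add: exp_add[symmetric] algebra_simps)
  finally show ?case .
qed

lemma binom_bound:
  assumes k1: "k \<ge> 1"
  shows "real (n choose k) \<le> 93^k * exp (real n / 93)"
proof -
  have "real (n choose k) * fact k \<le> real n ^ k"
    using binomial_fact_pow[of n k] by (metis of_nat_fact of_nat_le_iff of_nat_mult of_nat_power)
  hence c1: "real (n choose k) \<le> real n ^ k / fact k" by (simp add: field_simps)
  have kpos: "real k > 0" using k1 by simp
  have "real n ^ k / fact k \<le> real n ^ k * exp (real k) / real k ^ k"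
  proof -
    have "real n ^ k * real k ^ k \<le> real n ^ k * (exp (real k) * fact k)"
      using pow_le_exp_fact[of k] by (intro mult_left_mono) auto
    thus ?thesis using kpos by (simp add: field_simps)
  qed
  also have "\<dots> = exp (real k) * 93^k * (real n / (93 * real k)) ^ k"
    using kpos by (simp add: field_simps power_mult_distrib power_divide)
  also have "\<dots> \<le> exp (real k) * 93^k * exp (real n / (93 * real k) - 1) ^ k"
  proof -
    have "real n / (93 * real k) \<le> exp (real n / (93 * real k) - 1)"
      using exp_ge_add_one_self[of "real n / (93 * real k) - 1"] by simp
    hence "(real n / (93 * real k)) ^ k \<le> exp (real n / (93 * real k) - 1) ^ k"
      by (intro power_mono) auto
    thus ?thesis by (intro mult_left_mono) auto
  qed
  also have "exp (real n / (93 * real k) - 1) ^ k = exp (real n / 93 - real k)"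
    using kpos by (simp add: exp_of_nat_mult[symmetric] field_simps)
  also have "exp (real k) * 93^k * exp (real n / 93 - real k) = 93^k * exp (real n / 93)"
    by (simp add: exp_diff)
  finally show ?thesis using c1 by simp
qed

lemma exp12: "(41013::real) \<le> exp 12"
proof -
  have "5/2 \<le> exp (1::real)" using exp_lower_Taylor_quadratic[of 1] by simp
  hence "(5/2::real)^12 \<le> exp 1 ^ 12" by (intro power_mono) auto
  also have "exp (1::real) ^ 12 = exp 12" by (simp add: exp_of_nat_mult[symmetric])
  finally have "(5/2::real)^12 \<le> exp 12" .
  moreover have "(41013::real) \<le> (5/2)^12" by (simp add: power_divide)
  ultimately show ?thesis by linarith
qed

lemma bad_card:
  fixes T :: "'n::finite set" and x :: "'n \<Rightarrow> real" and y :: "nat \<Rightarrow> real"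
  assumes x1: "(\<Sum>i\<in>T. (x i)^2) \<le> 1" and y1: "(\<Sum>l<k. (y l)^2) \<le> 1" and s0: "s \<ge> 0"
  shows "real (card {Q \<in> PiE (UNIV \<times> {..<k}) (\<lambda>_. {-1,1::real}). s \<le> bil T {..<k} (\<lambda>i l. Q (i,l)) x y})
           \<le> 2^(CARD('n) * k) * exp (-(s^2)/2)"
proof -
  define w where "w = (\<lambda>(i,l). if i \<in> T then x i * y l else (0::real))"
  have eq: "bil T {..<k} (\<lambda>i l. Q (i,l)) x y = (\<Sum>p\<in>UNIV \<times> {..<k}. w p * Q p)" for Q
  proof -
    have "(\<Sum>p\<in>UNIV \<times> {..<k}. w p * Q p) = (\<Sum>i\<in>UNIV. \<Sum>l<k. w (i,l) * Q (i,l))"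
      by (simp add: sum.cartesian_product)
    also have "\<dots> = (\<Sum>i\<in>UNIV. if i \<in> T then (\<Sum>l<k. x i * y l * Q (i,l)) else 0)"
      by (rule sum.cong) (auto simp: w_def)
    also have "\<dots> = (\<Sum>i\<in>T. \<Sum>l<k. x i * y l * Q (i,l))"
      by (simp add: sum.If_cases)
    finally show ?thesis by (simp add: bil_def)
  qed
  have w2: "(\<Sum>p\<in>UNIV \<times> {..<k}. (w p)^2) \<le> 1"
  proof -
    have "(\<Sum>p\<in>UNIV \<times> {..<k}. (w p)^2) = (\<Sum>i\<in>UNIV. \<Sum>l<k. (w (i,l))^2)"
      by (simp add: sum.cartesian_product)
    also have "\<dots> = (\<Sum>i\<in>UNIV. if i \<in> T then (\<Sum>l<k. (x i)^2 * (y l)^2) else 0)"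
      by (rule sum.cong) (auto simp: w_def power_mult_distrib)
    also have "\<dots> = (\<Sum>i\<in>T. (x i)^2) * (\<Sum>l<k. (y l)^2)"
      by (simp add: sum.If_cases sum_product)
    also have "\<dots> \<le> 1 * 1"
      using x1 y1 by (intro mult_mono) (auto simp: sum_nonneg)
    finally show ?thesis by simp
  qed
  have "real (card {Q \<in> PiE (UNIV \<times> {..<k}) (\<lambda>_. {-1,1::real}). s \<le> (\<Sum>p\<in>UNIV \<times> {..<k}. w p * Q p)})
           \<le> 2^card (UNIV \<times> {..<k} :: ('n \<times> nat) set) * exp (-(s^2)/2)"
    by (rule hoeff_count[OF _ w2 s0]) simp
  thus ?thesis by (simp add: eq card_cartesian_product)
qed

lemma good_Q_exists:
  fixes k :: nat and s :: real
  assumes k1: "k \<ge> 1"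
    and sdef: "s = sqrt (2 * (14 * real k + real CARD('n::finite) / 93 + 1))"
  shows "\<exists>Q::('n \<times> nat \<Rightarrow> real). Q \<in> PiE (UNIV \<times> {..<k}) (\<lambda>_. {-1,1}) \<and>
     (\<forall>T::'n set. card T = k \<longrightarrow> (\<forall>x\<in>netpts T. \<forall>y\<in>netpts {..<k}. bil T {..<k} (\<lambda>i l. Q (i,l)) x y < s))"
proof -
  define n where "n = CARD('n)"
  define \<Omega> where "\<Omega> = PiE ((UNIV::'n set) \<times> {..<k}) (\<lambda>_. {-1,1::real})"
  define Tk where "Tk = {T::'n set. card T = k}"
  define C where "C = {..<k}"
  define E where "E = 2^(n * k) * exp (-(s^2)/2)"
  define bad where "bad = (\<lambda>(T::'n set) x y. {Q \<in> \<Omega>. s \<le> bil T C (\<lambda>i l. Q (i,l)) x y})"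
  define Bad where "Bad = (\<Union>T\<in>Tk. \<Union>x\<in>netpts T. \<Union>y\<in>netpts C. bad T x y)"
  have s0: "s \<ge> 0" unfolding sdef by simp
  have s2: "s^2 / 2 = 14 * real k + real n / 93 + 1"
    unfolding sdef n_def by simp
  have finO: "finite \<Omega>" unfolding \<Omega>_def by (simp add: finite_PiE)
  have cardO: "card \<Omega> = 2^(n*k)"
    unfolding \<Omega>_def n_def by (simp add: card_PiE card_cartesian_product numeral_2_eq_2)
  have finTk: "finite Tk" unfolding Tk_def by simp
  have cardTk: "card Tk = n choose k"
    using n_subsets[of "UNIV::'n set" k] unfolding Tk_def n_def by simp
  have cC: "card C = k" unfolding C_def by simp
  have netC: "finite (netpts C) \<and> real (card (netpts C)) \<le> (21 * exp 1)^k"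
    using netpts_card[of C k] cC unfolding C_def by simp
  have netT: "finite (netpts T) \<and> real (card (netpts T)) \<le> (21 * exp 1)^k" if "T \<in> Tk" for T
    using netpts_card[of T k] that unfolding Tk_def by simp
  have badc: "real (card (bad T x y)) \<le> E" if "T \<in> Tk" "x \<in> netpts T" "y \<in> netpts C" for T x y
  proof -
    have "(\<Sum>l<k. (y l)^2) \<le> 1" using netpts_norm[OF that(3)] unfolding C_def .
    from bad_card[OF netpts_norm[OF that(2)] this s0]
    show ?thesis unfolding bad_def E_def \<Omega>_def C_def n_def .
  qed
  have X: "(41013^k * exp (real n / 93)) * exp (2 * real k) * exp (-(s^2)/2) \<le> exp (-1)"
  proof -
    have ee: "real n / 93 + 2 * real k + (-(s^2)/2) = - 12 * real k - 1" using s2 by linarith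
    have e: "exp (real n / 93) * exp (2 * real k) * exp (-(s^2)/2) = exp (- 12 * real k - 1)"
      by (simp only: exp_add[symmetric] ee)
    have "(41013^k * exp (real n / 93)) * exp (2 * real k) * exp (-(s^2)/2)
        = 41013^k * (exp (real n / 93) * exp (2 * real k) * exp (-(s^2)/2))"
      by (simp only: mult.assoc)
    also have "\<dots> = 41013^k * exp (- 12 * real k - 1)" by (simp only: e)
    also have "\<dots> \<le> exp 12 ^ k * exp (- 12 * real k - 1)"
      by (rule mult_right_mono[OF power_mono[OF exp12]]) simp_all
    also have "exp 12 ^ k * exp (- 12 * real k - 1) = exp (real k * 12 + (- 12 * real k - 1))"
      by (simp only: exp_of_nat_mult[symmetric] exp_add)
    also have "\<dots> = exp (-1)" by simp
    finally show ?thesis .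
  qed
  have "real (card Bad) \<le> (\<Sum>T\<in>Tk. real (card (\<Union>x\<in>netpts T. \<Union>y\<in>netpts C. bad T x y)))"
  proof -
    have "card Bad \<le> (\<Sum>T\<in>Tk. card (\<Union>x\<in>netpts T. \<Union>y\<in>netpts C. bad T x y))"
      unfolding Bad_def by (rule card_UN_le[OF finTk])
    hence "real (card Bad) \<le> real (\<Sum>T\<in>Tk. card (\<Union>x\<in>netpts T. \<Union>y\<in>netpts C. bad T x y))"
      by (rule of_nat_mono)
    thus ?thesis by simp
  qed
  also have "\<dots> \<le> (\<Sum>T\<in>Tk. \<Sum>x\<in>netpts T. real (card (\<Union>y\<in>netpts C. bad T x y)))"
  proof (rule sum_mono)
    fix T assume "T \<in> Tk"
    show "real (card (\<Union>x\<in>netpts T. \<Union>y\<in>netpts C. bad T x y)) \<le> (\<Sum>x\<in>netpts T. real (card (\<Union>y\<in>netpts C. bad T x y)))"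
    proof -
      have "card (\<Union>x\<in>netpts T. \<Union>y\<in>netpts C. bad T x y) \<le> (\<Sum>x\<in>netpts T. card (\<Union>y\<in>netpts C. bad T x y))"
        using netT[OF \<open>T\<in>Tk\<close>] by (intro card_UN_le) simp
      hence "real (card (\<Union>x\<in>netpts T. \<Union>y\<in>netpts C. bad T x y)) \<le> real (\<Sum>x\<in>netpts T. card (\<Union>y\<in>netpts C. bad T x y))"
        by (rule of_nat_mono)
      thus ?thesis by simp
    qed
  qed
  also have "\<dots> \<le> (\<Sum>T\<in>Tk. \<Sum>x\<in>netpts T. \<Sum>y\<in>netpts C. real (card (bad T x y)))"
  proof (intro sum_mono)
    fix T x assume "T \<in> Tk" "x \<in> netpts T"
    show "real (card (\<Union>y\<in>netpts C. bad T x y)) \<le> (\<Sum>y\<in>netpts C. real (card (bad T x y)))"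
    proof -
      have "card (\<Union>y\<in>netpts C. bad T x y) \<le> (\<Sum>y\<in>netpts C. card (bad T x y))"
        using netC by (intro card_UN_le) simp
      hence "real (card (\<Union>y\<in>netpts C. bad T x y)) \<le> real (\<Sum>y\<in>netpts C. card (bad T x y))"
        by (rule of_nat_mono)
      thus ?thesis by simp
    qed
  qed
  also have "\<dots> \<le> (\<Sum>T\<in>Tk. \<Sum>x\<in>netpts T. \<Sum>y\<in>netpts C. E)"
    by (intro sum_mono badc) auto
  also have "\<dots> = (\<Sum>T\<in>Tk. real (card (netpts T)) * (real (card (netpts C)) * E))"
    by simp
  also have "\<dots> \<le> (\<Sum>T\<in>Tk. (21 * exp 1)^k * ((21 * exp 1)^k * E))"
  proof (rule sum_mono)
    fix T assume "T \<in> Tk"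
    have E0: "E \<ge> 0" unfolding E_def by simp
    show "real (card (netpts T)) * (real (card (netpts C)) * E) \<le> (21 * exp 1)^k * ((21 * exp 1)^k * E)"
      using netT[OF \<open>T\<in>Tk\<close>] netC E0 by (intro mult_mono) (auto intro: mult_right_mono)
  qed
  also have "\<dots> = real (n choose k) * ((21 * exp 1)^k * ((21 * exp 1)^k * E))"
    using cardTk by simp
  also have "\<dots> \<le> (93^k * exp (real n / 93)) * ((21 * exp 1)^k * ((21 * exp 1)^k * E))"
    using binom_bound[OF k1, of n] unfolding E_def by (intro mult_right_mono) auto
  also have "\<dots> = 2^(n*k) * ((41013^k * exp (real n / 93)) * exp (2 * real k) * exp (-(s^2)/2))"
  proof -
    have "(21 * exp 1)^k * (21 * exp (1::real))^k = 441^k * exp (2 * real k)"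
    proof -
      have a: "(21 * exp (1::real))^k * (21 * exp 1)^k = (21^k * 21^k) * (exp 1 ^ k * exp 1 ^ k)"
        by (simp add: power_mult_distrib mult_ac)
      have b: "(21::real)^k * 21^k = 441^k" by (simp add: power_mult_distrib[symmetric])
      have c: "exp (1::real) ^ k * exp 1 ^ k = exp (2 * real k)"
        by (simp add: exp_of_nat_mult[symmetric] exp_add[symmetric])
      show ?thesis unfolding a b c ..
    qed
    moreover have "(93::real)^k * 441^k = 41013^k" by (simp add: power_mult_distrib[symmetric])
    ultimately have h: "(93::real)^k * ((21 * exp 1)^k * (21 * exp 1)^k) = 41013^k * exp (2 * real k)"
      by (metis mult.assoc)
    have gen: "\<And>a x b p q c d::real. a * (b * b) = c * d \<Longrightarrow> (a * x) * (b * (b * (p * q))) = p * ((c * x) * d * q)"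
      by (metis mult.assoc mult.left_commute)
    show ?thesis unfolding E_def by (rule gen[OF h])
  qed
  also have "2^(n*k) * ((41013^k * exp (real n / 93)) * exp (2 * real k) * exp (-(s^2)/2)) \<le> 2^(n*k) * exp (-1)"
    by (rule mult_left_mono[OF X]) simp
  finally have "real (card Bad) \<le> 2^(n*k) * exp (-1)" .
  also have "\<dots> < 2^(n*k)" by simp
  finally have "card Bad < card \<Omega>" using cardO by simp
  hence cB: "card Bad < card \<Omega>" .
  have "\<not> \<Omega> \<subseteq> Bad"
  proof (rule notI)
    assume "\<Omega> \<subseteq> Bad"
    moreover have "Bad \<subseteq> \<Omega>" unfolding Bad_def bad_def by blast
    ultimately have "Bad = \<Omega>" by blast
    thus False using cB by simp
  qed
  then obtain Q where Q: "Q \<in> \<Omega>" "Q \<notin> Bad" by blast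
  show ?thesis
  proof (intro exI conjI allI impI ballI)
    show "Q \<in> PiE (UNIV \<times> {..<k}) (\<lambda>_. {-1,1})" using Q(1) unfolding \<Omega>_def .
    fix T :: "'n set" and x y assume "card T = k" "x \<in> netpts T" "y \<in> netpts {..<k}"
    thus "bil T {..<k} (\<lambda>i l. Q (i,l)) x y < s"
    proof -
      have "Q \<notin> bad T x y" using Q(2) \<open>card T = k\<close> \<open>x \<in> netpts T\<close> \<open>y \<in> netpts {..<k}\<close>
        unfolding Bad_def Tk_def C_def by blast
      thus ?thesis using Q(1) unfolding bad_def C_def by (simp add: not_le)
    qed
  qed
qed

lemma wu_ineq:
  fixes w u r :: real
  assumes w1: "1 \<le> w" and u0: "0 \<le> u" and u1: "u \<le> 53/100" and r0: "0 < r" and r1: "r < 1/93"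
    and X0: "0 \<le> u^2 - 2*u*r + r*w"
  shows "(1 - 93*r) * (w * (u^2 - 2*u*r + r*w)) < 3*(1 + 54*r)*(w-u)^2"
proof -
  define X where "X = u^2 - 2*u*r + r*w"
  have wX: "0 \<le> w * X" using w1 X0 unfolding X_def by simp
  have s1: "(1 - 93*r) * (w * X) \<le> w * X"
  proof -
    have "0 \<le> (93*r) * (w * X)" using wX r0 by simp
    thus ?thesis by (simp add: algebra_simps)
  qed
  have s2: "w * X \<le> w * (u^2 + r*w)"
    using w1 u0 r0 unfolding X_def by (intro mult_left_mono) auto
  have s3: "w * (u^2 + r*w) \<le> w^2 * (u^2 + r)"
  proof -
    have "w * u^2 \<le> w^2 * u^2" using w1 by (intro mult_right_mono) (auto simp: power2_eq_square)
    thus ?thesis by (simp add: algebra_simps power2_eq_square)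
  qed
  have key: "u^2 + r < 3 * (1-u)^2"
  proof -
    have "u^2 \<le> (53/100)^2" using u0 u1 by (intro power_mono) auto
    moreover have "(47/100)^2 \<le> (1-u)^2" using u1 by (intro power_mono) auto
    ultimately show ?thesis using r1 by (simp add: power2_eq_square)
  qed
  have s4: "w^2 * (u^2 + r) < w^2 * (3 * (1-u)^2)"
    using key w1 by (intro mult_strict_left_mono) auto
  have s5: "w^2 * (3 * (1-u)^2) \<le> 3 * (w-u)^2"
  proof -
    have "u * 1 \<le> u * w" using w1 u0 by (intro mult_left_mono) auto
    hence "w * (1-u) \<le> w - u" by (simp add: algebra_simps)
    moreover have "0 \<le> w * (1-u)" using w1 u1 by simp
    ultimately have "(w * (1-u))^2 \<le> (w - u)^2" by (intro power_mono) auto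
    thus ?thesis by (simp add: power_mult_distrib)
  qed
  have s6: "3 * (w-u)^2 \<le> 3*(1 + 54*r)*(w-u)^2"
    using r0 by (simp add: mult_le_cancel_right1 algebra_simps)
  show ?thesis using s1 s2 s3 s4 s5 s6 unfolding X_def by linarith
qed

lemma quad_Y:
  fixes Q :: "'n \<times> nat \<Rightarrow> real"
  shows "(\<Sum>i\<in>T. \<Sum>j\<in>T. x i * (\<Sum>l<k. Q(i,l) * Q(j,l)) * x j) = (\<Sum>l<k. (\<Sum>i\<in>T. x i * Q(i,l))^2)"
proof -
  have "(\<Sum>l<k. (\<Sum>i\<in>T. x i * Q(i,l))^2) = (\<Sum>l<k. \<Sum>i\<in>T. \<Sum>j\<in>T. x i * Q(i,l) * (x j * Q(j,l)))"
    by (simp add: power2_eq_square sum_product)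
  also have "\<dots> = (\<Sum>i\<in>T. \<Sum>l<k. \<Sum>j\<in>T. x i * Q(i,l) * (x j * Q(j,l)))"
    by (rule sum.swap)
  also have "\<dots> = (\<Sum>i\<in>T. \<Sum>j\<in>T. \<Sum>l<k. x i * Q(i,l) * (x j * Q(j,l)))"
    by (rule sum.cong[OF refl], rule sum.swap)
  also have "\<dots> = (\<Sum>i\<in>T. \<Sum>j\<in>T. x i * (\<Sum>l<k. Q(i,l) * Q(j,l)) * x j)"
    by (simp add: sum_distrib_left sum_distrib_right mult_ac)
  finally show ?thesis by simp
qed

lemma quad_G:
  fixes Q :: "'n \<times> nat \<Rightarrow> real"
  assumes "finite T"
  shows "(\<Sum>i\<in>T. \<Sum>j\<in>T. x i * ((if i = j then a else 0) - (\<Sum>l<k. Q(i,l) * Q(j,l))) * x j)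
        = a * (\<Sum>i\<in>T. (x i)^2) - (\<Sum>l<k. (\<Sum>i\<in>T. x i * Q(i,l))^2)"
proof -
  have "(\<Sum>i\<in>T. \<Sum>j\<in>T. x i * ((if i = j then a else 0) - (\<Sum>l<k. Q(i,l) * Q(j,l))) * x j)
      = (\<Sum>i\<in>T. \<Sum>j\<in>T. x i * (if i = j then a else 0) * x j) - (\<Sum>i\<in>T. \<Sum>j\<in>T. x i * (\<Sum>l<k. Q(i,l) * Q(j,l)) * x j)"
    by (simp add: algebra_simps sum_subtractf)
  also have "(\<Sum>i\<in>T. \<Sum>j\<in>T. x i * (if i = j then a else 0) * x j) = a * (\<Sum>i\<in>T. (x i)^2)"
  proof -
    have "(\<Sum>i\<in>T. \<Sum>j\<in>T. x i * (if i = j then a else 0) * x j) = (\<Sum>i\<in>T. x i * a * x i)"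
    proof (intro sum.cong refl)
      fix i assume "i \<in> T"
      have e: "\<And>j. x i * (if i = j then a else 0) * x j = (if i = j then x i * a * x i else 0)" by simp
      show "(\<Sum>j\<in>T. x i * (if i = j then a else 0) * x j) = x i * a * x i"
        unfolding e using assms \<open>i \<in> T\<close> by (simp add: sum.delta)
    qed
    thus ?thesis by (simp add: sum_distrib_left power2_eq_square mult_ac)
  qed
  finally show ?thesis by (simp add: quad_Y)
qed

definition Gmat :: "real \<Rightarrow> nat \<Rightarrow> ('n::finite \<times> nat \<Rightarrow> real) \<Rightarrow> real^'n^'n" where
  "Gmat a k Q = (\<chi> i j. (if i = j then a else 0) - (\<Sum>l<k. Q(i,l) * Q(j,l)))"

lemma Gmat_kpsd:
  fixes Q :: "'n::finite \<times> nat \<Rightarrow> real"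
  assumes H: "\<And>T x. card T = k \<Longrightarrow> (\<Sum>l<k. (\<Sum>i\<in>T. x i * Q(i,l))^2) \<le> a * (\<Sum>i\<in>T. (x i)^2)"
  shows "Gmat a k Q \<in> kpsd_closure k"
  unfolding kpsd_closure_def
proof (intro CollectI conjI allI impI)
  show "sym_mat (Gmat a k Q)"
    unfolding sym_mat_def Gmat_def transpose_def by (simp add: vec_eq_iff mult.commute eq_commute)
  fix T :: "'n set" assume cT: "card T = k"
  show "principal_psd (Gmat a k Q) T"
    unfolding principal_psd_def
  proof
    fix x :: "'n \<Rightarrow> real"
    have "(\<Sum>i\<in>T. \<Sum>j\<in>T. x i * Gmat a k Q $ i $ j * x j)
        = a * (\<Sum>i\<in>T. (x i)^2) - (\<Sum>l<k. (\<Sum>i\<in>T. x i * Q(i,l))^2)"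
      unfolding Gmat_def by (simp add: quad_G)
    thus "0 \<le> (\<Sum>i\<in>T. \<Sum>j\<in>T. x i * Gmat a k Q $ i $ j * x j)" using H[OF cT, of x] by simp
  qed
qed

lemma CS_double:
  fixes A B :: "'a::finite \<Rightarrow> 'b::finite \<Rightarrow> real"
  shows "(\<Sum>i\<in>UNIV. \<Sum>j\<in>UNIV. A i j * B i j)^2 \<le> (\<Sum>i\<in>UNIV. \<Sum>j\<in>UNIV. (A i j)^2) * (\<Sum>i\<in>UNIV. \<Sum>j\<in>UNIV. (B i j)^2)"
proof -
  have e1: "(\<Sum>i\<in>UNIV. \<Sum>j\<in>UNIV. A i j * B i j) = (\<Sum>p\<in>UNIV. A (fst p) (snd p) * B (fst p) (snd p))"
    unfolding sum.cartesian_product by (simp add: case_prod_beta)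
  have e2: "(\<Sum>i\<in>UNIV. \<Sum>j\<in>UNIV. (A i j)^2) = (\<Sum>p\<in>UNIV. (A (fst p) (snd p))^2)"
    unfolding sum.cartesian_product by (simp add: case_prod_beta)
  have e3: "(\<Sum>i\<in>UNIV. \<Sum>j\<in>UNIV. (B i j)^2) = (\<Sum>p\<in>UNIV. (B (fst p) (snd p))^2)"
    unfolding sum.cartesian_product by (simp add: case_prod_beta)
  show ?thesis unfolding e1 e2 e3 by (rule Cauchy_Schwarz_ineq_sum)
qed

lemma psd_zero: "psd (0::real^'n::finite^'n)"
  unfolding psd_def sym_mat_def by (simp add: transpose_def vec_eq_iff)

lemma psd_Y_nonneg:
  fixes N :: "real^'n::finite^'n" and Q :: "'n \<times> nat \<Rightarrow> real"
  assumes "psd N"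
  shows "0 \<le> (\<Sum>i\<in>UNIV. \<Sum>j\<in>UNIV. N$i$j * (\<Sum>l<k. Q(i,l) * Q(j,l)))"
proof -
  have each: "0 \<le> (\<Sum>i\<in>UNIV. \<Sum>j\<in>UNIV. Q(i,l) * N$i$j * Q(j,l))" for l
  proof -
    define c :: "real^'n" where "c = (\<chi> i. Q(i,l))"
    have "0 \<le> c \<bullet> (N *v c)" using assms unfolding psd_def by blast
    also have "c \<bullet> (N *v c) = (\<Sum>i\<in>UNIV. \<Sum>j\<in>UNIV. Q(i,l) * N$i$j * Q(j,l))"
      by (simp add: c_def inner_vec_def matrix_vector_mult_def sum_distrib_left mult_ac)
    finally show ?thesis .
  qed
  have "(\<Sum>i\<in>UNIV. \<Sum>j\<in>UNIV. N$i$j * (\<Sum>l<k. Q(i,l) * Q(j,l)))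
      = (\<Sum>i\<in>UNIV. \<Sum>j\<in>UNIV. \<Sum>l<k. Q(i,l) * N$i$j * Q(j,l))"
    by (simp add: sum_distrib_left mult_ac)
  also have "\<dots> = (\<Sum>i\<in>UNIV. \<Sum>l<k. \<Sum>j\<in>UNIV. Q(i,l) * N$i$j * Q(j,l))"
    by (rule sum.cong[OF refl], rule sum.swap)
  also have "\<dots> = (\<Sum>l<k. \<Sum>i\<in>UNIV. \<Sum>j\<in>UNIV. Q(i,l) * N$i$j * Q(j,l))"
    by (rule sum.swap)
  finally show ?thesis using each by (simp add: sum_nonneg)
qed

lemma dist_lower:
  fixes M :: "real^'n::finite^'n" and Y :: "'n \<Rightarrow> 'n \<Rightarrow> real"
  assumes psdY: "\<And>N. psd N \<Longrightarrow> 0 \<le> (\<Sum>i\<in>UNIV. \<Sum>j\<in>UNIV. N$i$j * Y i j)"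
    and pos: "0 < c" and Mc: "(\<Sum>i\<in>UNIV. \<Sum>j\<in>UNIV. M$i$j * Y i j) \<le> -c"
    and F0: "0 < F2" and F: "F2 = (\<Sum>i\<in>UNIV. \<Sum>j\<in>UNIV. (Y i j)^2)"
  shows "c / sqrt F2 \<le> distF_psd M"
  unfolding distF_psd_def
proof (rule cInf_greatest)
  show "{frob (M - N) |N. psd N} \<noteq> {}" using psd_zero by blast
  fix v assume "v \<in> {frob (M - N) |N. psd N}"
  then obtain N where N: "psd N" and v: "v = frob (M - N)" by blast
  define S where "S = (\<Sum>i\<in>UNIV. \<Sum>j\<in>UNIV. (M - N)$i$j * Y i j)"
  have "S = (\<Sum>i\<in>UNIV. \<Sum>j\<in>UNIV. M$i$j * Y i j) - (\<Sum>i\<in>UNIV. \<Sum>j\<in>UNIV. N$i$j * Y i j)"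
    unfolding S_def by (simp add: algebra_simps sum_subtractf)
  hence Sc: "S \<le> -c" using psdY[OF N] Mc by simp
  have "S^2 \<le> (\<Sum>i\<in>UNIV. \<Sum>j\<in>UNIV. ((M - N)$i$j)^2) * F2"
    unfolding S_def F by (rule CS_double)
  also have "(\<Sum>i\<in>UNIV. \<Sum>j\<in>UNIV. ((M - N)$i$j)^2) = v^2"
  proof -
    have "0 \<le> (\<Sum>i\<in>UNIV. \<Sum>j\<in>UNIV. ((M - N)$i$j)^2)" by (intro sum_nonneg) auto
    thus ?thesis unfolding v frob_def by simp
  qed
  finally have "S^2 \<le> v^2 * F2" .
  moreover have "c^2 \<le> S^2"
  proof -
    have "c^2 \<le> (-S)^2" using Sc pos by (intro power_mono) auto
    thus ?thesis by simp
  qed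
  ultimately have "c^2 \<le> v^2 * F2" by linarith
  hence "sqrt (c^2) \<le> sqrt (v^2 * F2)" by (rule real_sqrt_le_mono)
  moreover have "v \<ge> 0" unfolding v frob_def by (simp add: sum_nonneg)
  ultimately have "c \<le> v * sqrt F2" using pos by (simp add: real_sqrt_mult)
  thus "c / sqrt F2 \<le> v" using F0 by (simp add: divide_le_eq)
qed

lemma Y_diag:
  fixes Q :: "'n \<times> nat \<Rightarrow> real"
  assumes hQ: "\<And>i l. l < k \<Longrightarrow> (Q(i,l))^2 = 1"
  shows "(\<Sum>l<k. Q(i,l) * Q(i,l)) = real k"
  using hQ by (simp add: power2_eq_square[symmetric])

lemma G_frob2:
  fixes Q :: "'n::finite \<times> nat \<Rightarrow> real"
  assumes hQ: "\<And>i l. l < k \<Longrightarrow> (Q(i,l))^2 = 1"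
  shows "(\<Sum>i\<in>UNIV. \<Sum>j\<in>UNIV. (Gmat a k Q $ i $ j)^2)
       = real CARD('n) * a^2 - 2 * a * real CARD('n) * real k + (\<Sum>i\<in>UNIV. \<Sum>j\<in>UNIV. (\<Sum>l<k. Q(i,l) * Q(j,l))^2)"
proof -
  define Y where "Y = (\<lambda>i j. \<Sum>l<k. Q(i,l) * Q(j,l))"
  have e: "(Gmat a k Q $ i $ j)^2 = (if i = j then a^2 - 2*a*Y i j else 0) + (Y i j)^2" for i j
    unfolding Gmat_def Y_def by (simp add: power2_eq_square algebra_simps)
  have "(\<Sum>i\<in>UNIV. \<Sum>j\<in>UNIV. (Gmat a k Q $ i $ j)^2)
        = (\<Sum>i\<in>UNIV. (a^2 - 2*a*Y i i) + (\<Sum>j\<in>UNIV. (Y i j)^2))"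
    unfolding e by (simp add: sum.distrib)
  also have "\<dots> = (\<Sum>i\<in>(UNIV::'n set). a^2 - 2*a*real k) + (\<Sum>i\<in>UNIV. \<Sum>j\<in>UNIV. (Y i j)^2)"
    using Y_diag[where Q=Q and k=k, OF hQ] by (simp add: sum.distrib Y_def)
  finally show ?thesis by (simp add: Y_def algebra_simps)
qed

lemma G_Y:
  fixes Q :: "'n::finite \<times> nat \<Rightarrow> real"
  assumes hQ: "\<And>i l. l < k \<Longrightarrow> (Q(i,l))^2 = 1"
  shows "(\<Sum>i\<in>UNIV. \<Sum>j\<in>UNIV. Gmat a k Q $ i $ j * (\<Sum>l<k. Q(i,l) * Q(j,l)))
       = a * real CARD('n) * real k - (\<Sum>i\<in>UNIV. \<Sum>j\<in>UNIV. (\<Sum>l<k. Q(i,l) * Q(j,l))^2)"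
proof -
  define Y where "Y = (\<lambda>i j. \<Sum>l<k. Q(i,l) * Q(j,l))"
  have e: "Gmat a k Q $ i $ j * Y i j = (if i = j then a * Y i j else 0) - (Y i j)^2" for i j
    unfolding Gmat_def Y_def by (simp add: power2_eq_square algebra_simps)
  have "(\<Sum>i\<in>UNIV. \<Sum>j\<in>UNIV. Gmat a k Q $ i $ j * Y i j)
        = (\<Sum>i\<in>UNIV. a * Y i i - (\<Sum>j\<in>UNIV. (Y i j)^2))"
    unfolding e by (simp add: sum_subtractf)
  also have "\<dots> = (\<Sum>i\<in>(UNIV::'n set). a * real k) - (\<Sum>i\<in>UNIV. \<Sum>j\<in>UNIV. (Y i j)^2)"
    using Y_diag[where Q=Q and k=k, OF hQ] by (simp add: sum_subtractf Y_def)
  finally show ?thesis by (simp add: Y_def algebra_simps)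
qed

lemma F2_lower:
  fixes Q :: "'n::finite \<times> nat \<Rightarrow> real"
  assumes hQ: "\<And>i l. l < k \<Longrightarrow> (Q(i,l))^2 = 1"
  shows "real k * (real CARD('n))^2 \<le> (\<Sum>i\<in>UNIV. \<Sum>j\<in>UNIV. (\<Sum>l<k. Q(i,l) * Q(j,l))^2)"
proof -
  define Y where "Y = (\<lambda>i j. \<Sum>l<k. Q(i,l) * Q(j,l))"
  have "(\<Sum>i\<in>UNIV. \<Sum>j\<in>UNIV. (Y i j)^2) = (\<Sum>i\<in>UNIV. \<Sum>j\<in>UNIV. \<Sum>l<k. Q(i,l) * Y i j * Q(j,l))"
    by (simp add: power2_eq_square Y_def sum_distrib_left mult_ac)
  also have "\<dots> = (\<Sum>i\<in>UNIV. \<Sum>l<k. \<Sum>j\<in>UNIV. Q(i,l) * Y i j * Q(j,l))"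
    by (rule sum.cong[OF refl], rule sum.swap)
  also have "\<dots> = (\<Sum>l<k. \<Sum>i\<in>UNIV. \<Sum>j\<in>UNIV. Q(i,l) * Y i j * Q(j,l))"
    by (rule sum.swap)
  also have "\<dots> = (\<Sum>l<k. \<Sum>l'<k. (\<Sum>i\<in>UNIV. Q(i,l) * Q(i,l'))^2)"
    unfolding Y_def
  proof (rule sum.cong[OF refl])
    fix l
    show "(\<Sum>i\<in>UNIV. \<Sum>j\<in>UNIV. Q(i,l) * (\<Sum>l'<k. Q(i,l') * Q(j,l')) * Q(j,l)) = (\<Sum>l'<k. (\<Sum>i\<in>UNIV. Q(i,l) * Q(i,l'))^2)"
      by (rule quad_Y)
  qed
  finally have F: "(\<Sum>i\<in>UNIV. \<Sum>j\<in>UNIV. (Y i j)^2) = (\<Sum>l<k. \<Sum>l'<k. (\<Sum>i\<in>UNIV. Q(i,l) * Q(i,l'))^2)" .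
  have "(\<Sum>l<k. (real CARD('n))^2) \<le> (\<Sum>l<k. \<Sum>l'<k. (\<Sum>i\<in>UNIV. Q(i,l) * Q(i,l'))^2)"
  proof (rule sum_mono)
    fix l assume "l \<in> {..<k}"
    hence lk: "l < k" by simp
    have "(\<Sum>i\<in>UNIV. Q(i,l) * Q(i,l)) = real CARD('n)"
      using hQ[OF lk] by (simp add: power2_eq_square[symmetric])
    hence "(real CARD('n))^2 = (\<Sum>i\<in>UNIV. Q(i,l) * Q(i,l))^2" by simp
    also have "\<dots> \<le> (\<Sum>l'<k. (\<Sum>i\<in>UNIV. Q(i,l) * Q(i,l'))^2)"
      using lk by (intro member_le_sum[where f="\<lambda>l'. (\<Sum>i\<in>UNIV. Q(i,l) * Q(i,l'))^2"]) auto
    finally show "(real CARD('n))^2 \<le> (\<Sum>l'<k. (\<Sum>i\<in>UNIV. Q(i,l) * Q(i,l'))^2)" .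
  qed
  thus ?thesis using F unfolding Y_def by simp
qed

lemma kpsd_scale:
  fixes A :: "real^'n::finite^'n"
  assumes "A \<in> kpsd_closure k" "0 \<le> c"
  shows "c *\<^sub>R A \<in> kpsd_closure k"
  using assms unfolding kpsd_closure_def
proof (intro CollectI conjI allI impI)
  show "sym_mat (c *\<^sub>R A)" using assms unfolding kpsd_closure_def sym_mat_def transpose_def
    by (simp add: vec_eq_iff)
  fix T :: "'n set" assume "card T = k"
  hence "principal_psd A T" using assms unfolding kpsd_closure_def by blast
  thus "principal_psd (c *\<^sub>R A) T" unfolding principal_psd_def
  proof (intro allI)
    fix x :: "'n \<Rightarrow> real"
    assume "\<forall>x. 0 \<le> (\<Sum>i\<in>T. \<Sum>j\<in>T. x i * A $ i $ j * x j)"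
    hence "0 \<le> c * (\<Sum>i\<in>T. \<Sum>j\<in>T. x i * A $ i $ j * x j)" using assms(2) by simp
    thus "0 \<le> (\<Sum>i\<in>T. \<Sum>j\<in>T. x i * (c *\<^sub>R A) $ i $ j * x j)"
      by (simp add: sum_distrib_left mult_ac)
  qed
qed

lemma frob_scale: "frob (c *\<^sub>R (A::real^'n::finite^'n)) = \<bar>c\<bar> * frob A"
proof -
  have "(\<Sum>i\<in>UNIV. \<Sum>j\<in>UNIV. ((c *\<^sub>R A)$i$j)^2) = c^2 * (\<Sum>i\<in>UNIV. \<Sum>j\<in>UNIV. (A$i$j)^2)"
    by (simp add: power_mult_distrib sum_distrib_left)
  thus ?thesis unfolding frob_def by (simp add: real_sqrt_mult)
qed

lemma distF_le_frob: "distF_psd (M::real^'n::finite^'n) \<le> frob M"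
proof -
  have "distF_psd M \<le> frob (M - 0)"
    unfolding distF_psd_def
  proof (rule cInf_lower)
    show "frob (M - 0) \<in> {frob (M - N) |N. psd N}" using psd_zero by blast
    show "bdd_below {frob (M - N) |N. psd N}"
      by (rule bdd_belowI[where m=0]) (auto simp: frob_def sum_nonneg)
  qed
  thus ?thesis by simp
qed

lemma distF_bar_ge:
  assumes "M \<in> K" "frob M = 1"
  shows "distF_psd (M::real^'n::finite^'n) \<le> distF_bar K"
  unfolding distF_bar_def
proof (rule cSup_upper)
  show "distF_psd M \<in> {distF_psd M |M. M \<in> K \<and> frob M = 1}" using assms by blast
  show "bdd_above {distF_psd M |M. M \<in> K \<and> frob M = 1}"
  proof (rule bdd_aboveI[where M=1])
    fix v assume "v \<in> {distF_psd M |M. M \<in> K \<and> frob M = 1}"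
    then obtain M' :: "real^'n^'n" where "v = distF_psd M'" "frob M' = 1" by blast
    thus "v \<le> 1" using distF_le_frob[of M'] by simp
  qed
qed

theorem theorem4:
  fixes r :: real and k :: nat
  assumes "r < 1/93"
    and "real k = r * real CARD('n)"
    and "k \<ge> 2"
  shows "distF_bar (kpsd_closure k :: (real^'n^'n) set)
           > sqrt (r - 93 * r^2) / sqrt (162 * r + 3)"
proof -
  note hr = assms(1) and hk = assms(2) and k2 = assms(3)
  define n where "n = CARD('n)"
  have n0: "real n > 0" by (simp add: n_def)
  have r_eq: "r = real k / real n" using hk n0 unfolding n_def by (simp add: field_simps)
  have k0: "real k > 0" using k2 by simp
  have r0: "r > 0" using k0 n0 r_eq by simp
  have n93: "93 * real k < real n"
  proof -
    have "real k < real n / 93" using hr hk n0 unfolding n_def by (simp add: field_simps)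
    thus ?thesis by simp
  qed
  define s where "s = sqrt (2 * (14 * real k + real n / 93 + 1))"
  obtain Q :: "'n \<times> nat \<Rightarrow> real" where QP: "Q \<in> PiE (UNIV \<times> {..<k}) (\<lambda>_. {-1,1})"
    and Qg: "\<forall>T::'n set. card T = k \<longrightarrow> (\<forall>x\<in>netpts T. \<forall>y\<in>netpts {..<k}. bil T {..<k} (\<lambda>i l. Q (i,l)) x y < s)"
    using good_Q_exists[where 'n='n and k=k and s=s] k2 unfolding s_def n_def by auto
  have hQ: "\<And>i l. l < k \<Longrightarrow> (Q(i,l))^2 = 1"
  proof -
    fix i l assume "l < k"
    hence "Q (i,l) \<in> {-1,1}" using QP by (auto simp: PiE_iff)
    thus "(Q(i,l))^2 = 1" by auto
  qed
  have s0: "s \<ge> 0" unfolding s_def by simp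
  define a where "a = (5/4 * s)^2"
  have a_eq: "a = 25/8 * (14 * real k + real n / 93 + 1)"
  proof -
    have "s^2 = 2 * (14 * real k + real n / 93 + 1)" unfolding s_def by simp
    moreover have "(5/4 * s)^2 = 25/16 * s^2" by (simp add: power2_eq_square)
    ultimately show ?thesis unfolding a_def by simp
  qed
  have H: "(\<Sum>l<k. (\<Sum>i\<in>T. x i * Q(i,l))^2) \<le> a * (\<Sum>i\<in>T. (x i)^2)" if cT: "card T = k" for T x
  proof -
    have finT: "finite T" using cT k2 by (metis card.infinite not_numeral_le_zero)
    have "(\<Sum>j\<in>{..<k}. (\<Sum>i\<in>T. x i * Q(i,j))^2) \<le> (5/4 * s)^2 * (\<Sum>i\<in>T. (x i)^2)"
    proof (rule net_bound[where q="\<lambda>i l. Q(i,l)"])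
      show "finite T" by (rule finT)
      show "finite {..<k}" by simp
      show "1 \<le> card T" using cT k2 by simp
      show "1 \<le> card {..<k}" using k2 by simp
      show "0 \<le> s" by (rule s0)
      fix x y assume "x \<in> netpts T" "y \<in> netpts {..<k}"
      hence "bil T {..<k} (\<lambda>i l. Q (i,l)) x y < s" using Qg cT by blast
      thus "bil T {..<k} (\<lambda>i l. Q (i,l)) x y \<le> s" by simp
    qed
    thus ?thesis unfolding a_def by simp
  qed
  define G where "G = Gmat a k Q"
  have Gk: "G \<in> kpsd_closure k" unfolding G_def by (rule Gmat_kpsd) (rule H)
  define Y where "Y = (\<lambda>i j. \<Sum>l<k. Q(i,l) * Q(j,l))"
  define F2 where "F2 = (\<Sum>i\<in>UNIV. \<Sum>j\<in>UNIV. (Y i j)^2)"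
  have F2lo: "real k * (real n)^2 \<le> F2"
    unfolding F2_def Y_def n_def by (rule F2_lower) (rule hQ)
  define X where "X = real n * a^2 - 2 * a * real n * real k + F2"
  have Gf: "(\<Sum>i\<in>UNIV. \<Sum>j\<in>UNIV. (G $ i $ j)^2) = X"
    unfolding G_def X_def F2_def Y_def n_def by (rule G_frob2) (rule hQ)
  have GY: "(\<Sum>i\<in>UNIV. \<Sum>j\<in>UNIV. G $ i $ j * Y i j) = a * real n * real k - F2"
    unfolding G_def F2_def Y_def n_def by (rule G_Y) (rule hQ)
  have a_le: "a \<le> 53/100 * real n"
  proof -
    have "real n \<ge> 186" using n93 k2 by linarith
    thus ?thesis unfolding a_eq using n93 by simp
  qed
  have a0: "a \<ge> 0" unfolding a_def by simp
  have kn: "real k < real n" using n93 k0 by linarith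
  have Xpos: "X > 0"
  proof -
    have "X \<ge> real n * a^2 - 2 * a * real n * real k + real k * (real n)^2"
      unfolding X_def using F2lo by simp
    also have "real n * a^2 - 2 * a * real n * real k + real k * (real n)^2
        = real n * ((a - real k)^2 + real k * (real n - real k))"
      by (simp add: power2_eq_square algebra_simps)
    finally have "X \<ge> real n * ((a - real k)^2 + real k * (real n - real k))" .
    moreover have "real n * ((a - real k)^2 + real k * (real n - real k)) > 0"
      using n0 k0 kn by (intro mult_pos_pos add_nonneg_pos) auto
    ultimately show ?thesis by linarith
  qed
  define g where "g = frob G"
  have g_eq: "g = sqrt X" unfolding g_def frob_def Gf ..
  have g0: "g > 0" using Xpos g_eq by simp
  have F20: "F2 > 0" using F2lo k0 n0 by (smt (verit) mult_pos_pos zero_less_power)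
  define c where "c = (F2 - a * real n * real k) / g"
  have cpos: "c > 0"
  proof -
    have "a * real n * real k < real k * (real n)^2"
    proof -
      have "a < real n" using a_le n0 by linarith
      hence "a * (real n * real k) < real n * (real n * real k)"
        using n0 k0 by (intro mult_strict_right_mono) auto
      thus ?thesis by (simp add: power2_eq_square mult_ac)
    qed
    thus ?thesis unfolding c_def using F2lo g0 by simp
  qed
  define M where "M = (1/g) *\<^sub>R G"
  have Mk: "M \<in> kpsd_closure k" unfolding M_def using Gk g0 by (intro kpsd_scale) auto
  have Mf: "frob M = 1" unfolding M_def frob_scale using g0 g_def by simp
  have MY: "(\<Sum>i\<in>UNIV. \<Sum>j\<in>UNIV. M $ i $ j * Y i j) \<le> -c"
  proof -
    have "(\<Sum>i\<in>UNIV. \<Sum>j\<in>UNIV. M $ i $ j * Y i j) = (1/g) * (\<Sum>i\<in>UNIV. \<Sum>j\<in>UNIV. G $ i $ j * Y i j)"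
      unfolding M_def by (simp add: sum_distrib_left mult_ac)
    also have "\<dots> = -c" unfolding GY c_def using g0 by (simp add: field_simps)
    finally show ?thesis by simp
  qed
  have dist: "c / sqrt F2 \<le> distF_psd M"
  proof (rule dist_lower[where Y=Y])
    show "\<And>N. psd N \<Longrightarrow> 0 \<le> (\<Sum>i\<in>UNIV. \<Sum>j\<in>UNIV. N $ i $ j * Y i j)"
      unfolding Y_def by (rule psd_Y_nonneg)
  qed (use cpos MY F20 F2_def in auto)
  have bar: "distF_psd M \<le> distF_bar (kpsd_closure k :: (real^'n^'n) set)"
    using distF_bar_ge[OF Mk Mf] by simp
  have final: "sqrt (r - 93 * r^2) / sqrt (162 * r + 3) < c / sqrt F2"
  proof -
    define w where "w = F2 / (real k * (real n)^2)"
    define u where "u = a / real n"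
    have w1: "1 \<le> w" unfolding w_def using F2lo k0 n0 by (simp add: field_simps)
    have u0: "0 \<le> u" unfolding u_def using a0 n0 by simp
    have u1: "u \<le> 53/100" unfolding u_def using a_le n0 by (simp add: field_simps)
    have r1: "r < 1/93" by (rule hr)
    have Xn: "u^2 - 2*u*r + r*w = X / (real n)^3"
      unfolding u_def w_def r_eq X_def using n0 k0
      by (simp add: field_simps power2_eq_square power3_eq_cube)
    have X0: "0 \<le> u^2 - 2*u*r + r*w" unfolding Xn using Xpos n0 by simp
    have wu: "(1 - 93*r) * (w * (u^2 - 2*u*r + r*w)) < 3*(1 + 54*r)*(w-u)^2"
      by (rule wu_ineq[OF w1 u0 u1 r0 r1 X0])
    have e0: "w * (u^2 - 2*u*r + r*w) * (real k^2 * real n^4) = r * (X * F2)"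
    proof -
      have "w * (u^2 - 2*u*r + r*w) * (real k^2 * real n^4) = w * (X / (real n)^3) * (real k^2 * real n^4)"
        by (simp only: Xn)
      also have "\<dots> = F2 / (real k * (real n)^2) * (X / (real n)^3) * (real k^2 * real n^4)"
        by (simp only: w_def)
      also have "\<dots> = real k / real n * (X * F2)"
        using n0 k0 by (simp add: field_simps power2_eq_square power3_eq_cube power4_eq_xxxx)
      finally show ?thesis unfolding r_eq .
    qed
    have e1: "(1 - 93*r) * (w * (u^2 - 2*u*r + r*w)) * (real k^2 * real n^4) = (r - 93 * r^2) * (X * F2)"
    proof -
      have "(1 - 93*r) * (w * (u^2 - 2*u*r + r*w)) * (real k^2 * real n^4) = (1 - 93*r) * (w * (u^2 - 2*u*r + r*w) * (real k^2 * real n^4))"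
        by (simp only: mult.assoc)
      also have "\<dots> = (1 - 93*r) * (r * (X * F2))" unfolding e0 ..
      also have "\<dots> = (r - 93 * r^2) * (X * F2)" by (simp add: algebra_simps power2_eq_square)
      finally show ?thesis .
    qed
    have e2: "3*(1 + 54*r)*(w-u)^2 * (real k^2 * real n^4) = (162 * r + 3) * (F2 - a * real n * real k)^2"
    proof -
      have wu1: "(w - u) * (real k * (real n)^2) = F2 - a * real n * real k"
        unfolding w_def u_def using n0 k0 by (simp add: field_simps power2_eq_square)
      have "3*(1 + 54*r)*(w-u)^2 * (real k^2 * real n^4) = (162 * r + 3) * ((w - u) * (real k * (real n)^2))^2"
        by (simp add: power_mult_distrib power2_eq_square power4_eq_xxxx algebra_simps)
      thus ?thesis unfolding wu1 .
    qed
    have pk: "real k^2 * real n^4 > 0" using n0 k0 by simp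
    have main: "(r - 93 * r^2) * (X * F2) < (162 * r + 3) * (F2 - a * real n * real k)^2"
      using mult_strict_right_mono[OF wu pk] unfolding e1 e2 .
    have den: "162 * r + 3 > 0" using r0 by simp
    have XF: "X * F2 > 0" using Xpos F20 by simp
    have "(r - 93 * r^2) / (162 * r + 3) < (F2 - a * real n * real k)^2 / (X * F2)"
      using main den XF by (simp add: divide_simps mult_ac)
    hence "sqrt ((r - 93 * r^2) / (162 * r + 3)) < sqrt ((F2 - a * real n * real k)^2 / (X * F2))"
      by (rule real_sqrt_less_mono)
    moreover have "sqrt ((F2 - a * real n * real k)^2 / (X * F2)) = c / sqrt F2"
    proof -
      have "F2 - a * real n * real k > 0" using cpos g0 unfolding c_def by (simp add: zero_less_divide_iff)
      thus ?thesis unfolding c_def g_eq using Xpos F20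
        by (simp add: real_sqrt_divide real_sqrt_mult)
    qed
    ultimately show ?thesis by (simp add: real_sqrt_divide)
  qed
  show ?thesis using final dist bar by linarith
qed

end
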